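(* Let $\epsilon\in(0,1)$, $u_0\in\mathbb{R}\setminus\{0,1,-1\}$, and let $h^*=\frac{2\epsilon^2}{u_0^2+|u_0|}$ if $|u_0|>1$ and $h^*=\epsilon^2$ if $0<|u_0|<1$. For every $h\in(0,h^*]$, any real sequence $(u_n)_{n\ge0}$ starting at $u_0$ and satisfying the Crank–Nicolson scheme $$\frac{u_n-u_{n-1}}{h}+\frac{1}{2\epsilon^2}\big(u_n^3-u_n\big)+\frac{1}{2\epsilon^2}\big(u_{n-1}^3-u_{n-1}\big)=0,\qquad n\ge1,$$ satisfies $E(u_n)\le E(u_{n-1})$ for all $n\ge1$, where $E(v)=\frac{1}{4\epsilon^2}(v^2-1)^2$.
   Context: The scheme discretizes the ODE $u'(t)+\frac{1}{\epsilon^2}(u^3-u)=0$, $u(0)=u_0$. For $h\le2\epsilon^2$ each step equation has a unique real solution. *)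

theory Defs
  imports Complex_Main
begin

definition energy :: "real \<Rightarrow> real \<Rightarrow> real" where
  "energy \<epsilon> v = (v\<^sup>2 - 1)\<^sup>2 / (4 * \<epsilon>\<^sup>2)"

definition hstar :: "real \<Rightarrow> real \<Rightarrow> real" where
  "hstar \<epsilon> u0 = (if \<bar>u0\<bar> > 1 then 2 * \<epsilon>\<^sup>2 / (u0\<^sup>2 + \<bar>u0\<bar>) else \<epsilon>\<^sup>2)"

end

theory Submission
  imports Defs
begin

lemma step_energy:
  fixes e h a b :: real
  assumes e: "0 < e" and h: "0 < h"
    and eq: "(a - b) / h + (a ^ 3 - a) / (2 * e\<^sup>2) + (b ^ 3 - b) / (2 * e\<^sup>2) = 0"
    and bd: "h * (b\<^sup>2 - a\<^sup>2) \<le> 4 * e\<^sup>2"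
  shows "energy e a \<le> energy e b"
proof -
  have e2: "e\<^sup>2 > 0" using e by simp
  have eq2: "2 * e\<^sup>2 * (a - b) + h * (a ^ 3 - a + b ^ 3 - b) = 0"
  proof -
    have "(2 * e\<^sup>2 * h) * ((a - b) / h + (a ^ 3 - a) / (2 * e\<^sup>2) + (b ^ 3 - b) / (2 * e\<^sup>2)) = 0"
      using eq by simp
    moreover have "(2 * e\<^sup>2 * h) * ((a - b) / h + (a ^ 3 - a) / (2 * e\<^sup>2) + (b ^ 3 - b) / (2 * e\<^sup>2))
       = 2 * e\<^sup>2 * (a - b) + h * (a ^ 3 - a + b ^ 3 - b)"
      using h e2 by (simp add: distrib_left diff_divide_distrib add_divide_distrib algebra_simps)
    ultimately show ?thesis by simp
  qed
  have key: "h * ((a\<^sup>2 - 1)\<^sup>2 - (b\<^sup>2 - 1)\<^sup>2) = - ((a - b)\<^sup>2 * (4 * e\<^sup>2 + h * (a\<^sup>2 - b\<^sup>2)))"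
  proof -
    have "h * ((a\<^sup>2 - 1)\<^sup>2 - (b\<^sup>2 - 1)\<^sup>2)
        = (a - b) * (2 * (h * (a ^ 3 - a + b ^ 3 - b)) - h * (a + b) * (a - b)\<^sup>2)"
      by (simp add: algebra_simps power2_eq_square power3_eq_cube)
    also have "\<dots> = (a - b) * (2 * (- 2 * e\<^sup>2 * (a - b)) - h * (a + b) * (a - b)\<^sup>2)"
    proof -
      have "h * (a ^ 3 - a + b ^ 3 - b) = - 2 * e\<^sup>2 * (a - b)" using eq2 by linarith
      then show ?thesis by simp
    qed
    also have "\<dots> = - ((a - b)\<^sup>2 * (4 * e\<^sup>2 + h * (a\<^sup>2 - b\<^sup>2)))"
      by (simp add: algebra_simps power2_eq_square)
    finally show ?thesis .
  qed
  have "4 * e\<^sup>2 + h * (a\<^sup>2 - b\<^sup>2) \<ge> 0" using bd by (simp add: algebra_simps)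
  then have "h * ((a\<^sup>2 - 1)\<^sup>2 - (b\<^sup>2 - 1)\<^sup>2) \<le> 0" using key by simp
  then have "(a\<^sup>2 - 1)\<^sup>2 - (b\<^sup>2 - 1)\<^sup>2 \<le> 0" using h by (simp add: mult_le_0_iff)
  then show ?thesis unfolding energy_def using e2 by (simp add: divide_right_mono)
qed

theorem theorem3p3:
  fixes \<epsilon> h :: real and u :: "nat \<Rightarrow> real"
  assumes eps: "0 < \<epsilon>" "\<epsilon> < 1"
    and u0: "u 0 \<noteq> 0" "u 0 \<noteq> 1" "u 0 \<noteq> -1"
    and h: "0 < h" "h \<le> hstar \<epsilon> (u 0)"
    and scheme: "\<And>n. n \<ge> 1 \<Longrightarrow>
       (u n - u (n - 1)) / h + (u n ^ 3 - u n) / (2 * \<epsilon>\<^sup>2)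
         + (u (n - 1) ^ 3 - u (n - 1)) / (2 * \<epsilon>\<^sup>2) = 0"
  shows "\<forall>n\<ge>1. energy \<epsilon> (u n) \<le> energy \<epsilon> (u (n - 1))"
proof -
  define B where "B = 1 + \<bar>(u 0)\<^sup>2 - 1\<bar>"
  have e2: "\<epsilon>\<^sup>2 > 0" using eps by simp
  have hB: "h * B \<le> 4 * \<epsilon>\<^sup>2"
  proof (cases "\<bar>u 0\<bar> > 1")
    case True
    have "1 < \<bar>u 0\<bar> ^ 2" using True by (intro one_less_power) auto
    then have sq: "(u 0)\<^sup>2 > 1" by simp
    then have B: "B = (u 0)\<^sup>2" unfolding B_def by simp
    have hs: "h \<le> 2 * \<epsilon>\<^sup>2 / ((u 0)\<^sup>2 + \<bar>u 0\<bar>)" using h(2) True unfolding hstar_def by simp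
    have pos: "(u 0)\<^sup>2 + \<bar>u 0\<bar> > 0" using True sq by linarith
    have "h * ((u 0)\<^sup>2 + \<bar>u 0\<bar>) \<le> 2 * \<epsilon>\<^sup>2" using hs pos by (simp add: field_simps)
    moreover have "h * (u 0)\<^sup>2 \<le> h * ((u 0)\<^sup>2 + \<bar>u 0\<bar>)" using h(1) by simp
    ultimately show ?thesis unfolding B using e2 by linarith
  next
    case False
    have hs: "h \<le> \<epsilon>\<^sup>2" using h(2) False unfolding hstar_def by simp
    have "(u 0)\<^sup>2 \<le> 1" using False by (simp add: abs_square_le_1)
    then have "B \<le> 2" unfolding B_def by simp
    have "h * B \<le> h * 2" using \<open>B \<le> 2\<close> h(1) by simp
    then show ?thesis using hs e2 by linarith
  qed
  have bound: "v\<^sup>2 \<le> B" if "energy \<epsilon> v \<le> energy \<epsilon> (u 0)" for v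
  proof -
    have "(v\<^sup>2 - 1)\<^sup>2 \<le> ((u 0)\<^sup>2 - 1)\<^sup>2" using that e2 unfolding energy_def
      by (simp add: divide_le_cancel)
    then have "\<bar>v\<^sup>2 - 1\<bar> \<le> \<bar>(u 0)\<^sup>2 - 1\<bar>" using abs_le_square_iff by blast
    then show ?thesis unfolding B_def by linarith
  qed
  have main: "energy \<epsilon> (u n) \<le> energy \<epsilon> (u 0) \<and> (n \<ge> 1 \<longrightarrow> energy \<epsilon> (u n) \<le> energy \<epsilon> (u (n - 1)))" for n
  proof (induction n)
    case 0
    then show ?case by simp
  next
    case (Suc n)
    have b: "(u n)\<^sup>2 \<le> B" using Suc bound by blast
    have "h * ((u n)\<^sup>2 - (u (Suc n))\<^sup>2) \<le> h * B"
    proof -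
      have "(u n)\<^sup>2 - (u (Suc n))\<^sup>2 \<le> B" using b zero_le_power2[of "u (Suc n)"] by linarith
      then show ?thesis using h(1) by (simp add: mult_left_mono)
    qed
    then have bd: "h * ((u n)\<^sup>2 - (u (Suc n))\<^sup>2) \<le> 4 * \<epsilon>\<^sup>2" using hB by linarith
    have "energy \<epsilon> (u (Suc n)) \<le> energy \<epsilon> (u n)"
      using step_energy[OF eps(1) h(1) _ bd] scheme[of "Suc n"] by simp
    then show ?case using Suc by simp
  qed
  show ?thesis using main by blast
qed

end
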